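(* Let $p$ be an odd prime, $k\in\{-1,1\}$ and $q$ a positive integer. For every Legendre graph $L_{qp}^k(f,p)$ of order $qp$, the minimum degree is $\delta(L_{qp}^k(f,p))=q\frac{p-1}{2}-1$ and the maximum degree is $\Delta(L_{qp}^k(f,p))=q\frac{p-1}{2}$.
   Context: For an odd prime $p$ and an integer $a$ not divisible by $p$, $(a/p)$ denotes the Legendre symbol: $1$ if $a$ is a quadratic residue mod $p$, $-1$ otherwise. For $k\in\{-1,1\}$, a Legendre graph $L_n^k(f,p)$ of order $n$ is a simple graph on an $n$-element vertex set $V$ together with a bijection $f:V\to\{1,2,\dots,n\}$, whose edges are exactly the pairs $\{a,b\}$ of distinct vertices with $p\nmid f(a)+f(b)$ and $((f(a)+f(b))/p)=k$. *)

theory Defs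
  imports "HOL-Number_Theory.Number_Theory"
begin

definition legendre_adj :: "int \<Rightarrow> nat \<Rightarrow> ('a \<Rightarrow> nat) \<Rightarrow> 'a \<Rightarrow> 'a \<Rightarrow> bool" where
  "legendre_adj k p f a b \<longleftrightarrow>
     a \<noteq> b \<and> \<not> (p dvd (f a + f b)) \<and> Legendre (int (f a + f b)) (int p) = k"

definition legendre_graph :: "nat \<Rightarrow> 'a set \<Rightarrow> ('a \<Rightarrow> nat) \<Rightarrow> bool" where
  "legendre_graph n V f \<longleftrightarrow> finite V \<and> bij_betw f V {1..n}"

definition lg_degree :: "int \<Rightarrow> nat \<Rightarrow> 'a set \<Rightarrow> ('a \<Rightarrow> nat) \<Rightarrow> 'a \<Rightarrow> nat" where
  "lg_degree k p V f v = card {u \<in> V. legendre_adj k p f v u}"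

definition lg_min_degree :: "int \<Rightarrow> nat \<Rightarrow> 'a set \<Rightarrow> ('a \<Rightarrow> nat) \<Rightarrow> nat" where
  "lg_min_degree k p V f = Min (lg_degree k p V f ` V)"

definition lg_max_degree :: "int \<Rightarrow> nat \<Rightarrow> 'a set \<Rightarrow> ('a \<Rightarrow> nat) \<Rightarrow> nat" where
  "lg_max_degree k p V f = Max (lg_degree k p V f ` V)"

end

theory Submission
  imports Defs
begin

lemma quadres_cong: "[a = b] (mod p) \<Longrightarrow> QuadRes p a = QuadRes p b"
  unfolding QuadRes_def by (meson cong_sym cong_trans)

lemma legendre_mod:
  fixes p x :: nat
  shows "Legendre (int x) (int p) = Legendre (int (x mod p)) (int p)"
proof -
  have c: "[int x = int (x mod p)] (mod int p)"
    by (simp add: cong_def of_nat_mod)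
  have "[int x = 0] (mod int p) = [int (x mod p) = 0] (mod int p)"
    using c by (meson cong_sym cong_trans)
  then show ?thesis unfolding Legendre_def
    using quadres_cong[OF c] by simp
qed

lemma qr_card:
  fixes p :: nat
  assumes "prime p" "odd p"
  shows "card {r \<in> {1..<p}. QuadRes (int p) (int r)} = (p - 1) div 2"
proof -
  define h where "h = (p - 1) div 2"
  define s where "s = (\<lambda>x::nat. x^2 mod p)"
  have p2: "p > 2" using prime_ge_2_nat[OF assms(1)] assms(2) by (cases "p = 2") auto
  have hp: "2 * h < p" "h \<ge> 1" using p2 assms(2) unfolding h_def by (auto elim!: oddE)
  have notdvd: "\<not> p dvd x" if "x \<in> {1..<p}" for x using that by (auto dest: dvd_imp_le)
  have img: "s ` {1..h} = {r \<in> {1..<p}. QuadRes (int p) (int r)}"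
  proof
    show "s ` {1..h} \<subseteq> {r \<in> {1..<p}. QuadRes (int p) (int r)}"
    proof
      fix r assume "r \<in> s ` {1..h}"
      then obtain x where x: "x \<in> {1..h}" "r = x^2 mod p" unfolding s_def by auto
      have "\<not> p dvd x" using notdvd[of x] x hp by auto
      hence "\<not> p dvd x^2" using assms(1) by (simp add: prime_dvd_power_iff)
      hence "r \<noteq> 0" using x(2) by (simp add: dvd_eq_mod_eq_0)
      moreover have "r < p" using x p2 by auto
      moreover have "QuadRes (int p) (int r)" unfolding QuadRes_def
        by (rule exI[of _ "int x"]) (simp add: x cong_def of_nat_mod flip: of_nat_power)
      ultimately show "r \<in> {r \<in> {1..<p}. QuadRes (int p) (int r)}" by auto
    qed
  next
    show "{r \<in> {1..<p}. QuadRes (int p) (int r)} \<subseteq> s ` {1..h}"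
    proof
      fix r assume r: "r \<in> {r \<in> {1..<p}. QuadRes (int p) (int r)}"
      then obtain y where y: "[y^2 = int r] (mod int p)" unfolding QuadRes_def by auto
      define y' where "y' = nat (y mod int p)"
      have y'p: "y' < p" unfolding y'_def using p2 by (simp add: nat_less_iff)
      have cy: "[int y' = y] (mod int p)" unfolding y'_def using p2
        by (simp add: cong_def)
      have cy2: "[int (y'^2) = int r] (mod int p)"
        using cong_pow[OF cy, of 2] y by (metis cong_trans of_nat_power)
      have "y' \<noteq> 0"
      proof
        assume "y' = 0"
        hence "[0 = int r] (mod int p)" using cy2 by simp
        hence "int p dvd int r" using cong_sym[of 0 "int r" "int p"] by (simp add: cong_0_iff)
        thus False using notdvd[of r] r by simp
      qed
      define x where "x = (if y' \<le> h then y' else p - y')"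
      have xr: "x \<in> {1..h}" unfolding x_def using \<open>y' \<noteq> 0\<close> y'p hp h_def assms(2) by (auto elim!: oddE)
      have "[int (x^2) = int (y'^2)] (mod int p)"
      proof (cases "y' \<le> h")
        case True thus ?thesis unfolding x_def by simp
      next
        case False
        hence "int x = int p - int y'" unfolding x_def using y'p by auto
        hence "int (x^2) = (int p - int y')^2" by simp
        also have "\<dots> = int (y'^2) + int p * (int p - 2 * int y')"
          by (simp add: power2_eq_square algebra_simps)
        finally have "int (x^2) = int (y'^2) + int p * (int p - 2 * int y')" .
        thus ?thesis by (simp add: cong_def)
      qed
      hence "[int (x^2) = int r] (mod int p)" using cy2 cong_trans by blast
      hence "[x^2 = r] (mod p)" by (simp only: cong_int_iff)
      hence "x^2 mod p = r" using r by (simp add: cong_def)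
      thus "r \<in> s ` {1..h}" using xr unfolding s_def by force
    qed
  qed
  have inj: "inj_on s {1..h}"
  proof
    fix x y assume x: "x \<in> {1..h}" and y: "y \<in> {1..h}" and e: "s x = s y"
    hence "[int x ^2 = int y ^2] (mod int p)" unfolding s_def
      by (metis cong_def cong_int_iff of_nat_power)
    hence "int p dvd (int x - int y) * (int x + int y)"
      by (simp add: cong_iff_dvd_diff power2_eq_square algebra_simps)
    hence "int p dvd (int x - int y) \<or> int p dvd (int x + int y)"
      using prime_dvd_mult_iff[of "int p"] assms(1) by simp
    thus "x = y"
    proof
      assume d: "int p dvd (int x - int y)"
      have "\<bar>int x - int y\<bar> < int p" using x y hp by auto
      show ?thesis
      proof (rule ccontr)
        assume "x \<noteq> y" hence "int x - int y \<noteq> 0" by simp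
        from dvd_imp_le_int[OF this d] show False using \<open>\<bar>int x - int y\<bar> < int p\<close> by simp
      qed
    next
      assume d: "int p dvd (int x + int y)"
      have "int x + int y < int p" "int x + int y > 0" using x y hp by auto
      from dvd_imp_le_int[OF _ d] show ?thesis using \<open>int x + int y < int p\<close> \<open>int x + int y > 0\<close> by simp
    qed
  qed
  show ?thesis using card_image[OF inj] img h_def by simp
qed


lemma window_card:
  fixes Q :: "nat \<Rightarrow> bool" and p m :: nat
  assumes "p > 0" and per: "\<And>b. Q b = Q (b mod p)"
  shows "card {b \<in> {m+1..m+p}. Q b} = card {r \<in> {0..<p}. Q r}"
proof -
  let ?g = "\<lambda>b. b mod p"
  have inj: "inj_on ?g {m+1..m+p}"
  proof
    fix x y assume x: "x \<in> {m+1..m+p}" and y: "y \<in> {m+1..m+p}" and e: "x mod p = y mod p"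
    show "x = y"
    proof (rule ccontr)
      assume ne: "x \<noteq> y"
      { fix a b assume a: "a \<in> {m+1..m+p}" "b \<in> {m+1..m+p}" "a < b" "a mod p = b mod p"
        hence "p dvd b - a" using mod_eq_dvd_iff_nat[of a b p] by simp
        moreover have "b - a > 0" "b - a < p" using a by auto
        ultimately have False by (meson dvd_imp_le not_le) }
      thus False using x y e ne by (metis linorder_neqE_nat)
    qed
  qed
  have img: "?g ` {m+1..m+p} = {0..<p}"
  proof -
    have "?g ` {m+1..m+p} \<subseteq> {0..<p}" using assms(1) by auto
    moreover have "card (?g ` {m+1..m+p}) = card {0..<p}" using card_image[OF inj] by simp
    ultimately show ?thesis using card_subset_eq[of "{0..<p}" "?g ` {m+1..m+p}"] by simp
  qed
  have "?g ` {b \<in> {m+1..m+p}. Q b} = {r \<in> {0..<p}. Q r}"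
  proof
    show "?g ` {b \<in> {m+1..m+p}. Q b} \<subseteq> {r \<in> {0..<p}. Q r}" using assms(1) per by auto
    show "{r \<in> {0..<p}. Q r} \<subseteq> ?g ` {b \<in> {m+1..m+p}. Q b}"
    proof
      fix r assume r: "r \<in> {r \<in> {0..<p}. Q r}"
      hence "r \<in> ?g ` {m+1..m+p}" using img by simp
      then obtain b where b: "b \<in> {m+1..m+p}" "r = b mod p" by blast
      hence "Q b" using per r by auto
      thus "r \<in> ?g ` {b \<in> {m+1..m+p}. Q b}" using b by blast
    qed
  qed
  moreover have "inj_on ?g {b \<in> {m+1..m+p}. Q b}" using inj by (rule inj_on_subset) auto
  ultimately show ?thesis using card_image by metis
qed

lemma block_card:
  fixes Q :: "nat \<Rightarrow> bool" and p m q :: nat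
  assumes "p > 0" and per: "\<And>b. Q b = Q (b mod p)"
  shows "card {b \<in> {m+1..m+q*p}. Q b} = q * card {r \<in> {0..<p}. Q r}"
proof (induction q)
  case 0 show ?case by simp
next
  case (Suc q)
  have "{b \<in> {m+1..m+Suc q*p}. Q b} = {b \<in> {m+1..m+q*p}. Q b} \<union> {b \<in> {(m+q*p)+1..(m+q*p)+p}. Q b}"
    by auto
  moreover have "card ({b \<in> {m+1..m+q*p}. Q b} \<union> {b \<in> {(m+q*p)+1..(m+q*p)+p}. Q b})
     = card {b \<in> {m+1..m+q*p}. Q b} + card {b \<in> {(m+q*p)+1..(m+q*p)+p}. Q b}"
    by (rule card_Un_disjoint) auto
  ultimately show ?case using Suc window_card[of p Q "m+q*p", OF assms(1) per] by simp
qed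

definition PP :: "int \<Rightarrow> nat \<Rightarrow> nat \<Rightarrow> bool" where
  "PP k p x \<longleftrightarrow> \<not> p dvd x \<and> Legendre (int x) (int p) = k"

lemma PP_per: "PP k p b = PP k p (b mod p)"
  unfolding PP_def using legendre_mod[of b p] by (simp add: dvd_mod_iff)

lemma res_card:
  assumes "prime p" "odd p" "k \<in> {-1, 1}"
  shows "card {r \<in> {0..<p}. PP k p r} = (p - 1) div 2"
proof -
  let ?R = "{r \<in> {1..<p}. QuadRes (int p) (int r)}"
  have L: "Legendre (int r) (int p) = (if QuadRes (int p) (int r) then 1 else -1)"
    if "r \<in> {1..<p}" for r
  proof -
    have "\<not> int p dvd int r" using that by (auto dest: dvd_imp_le)
    thus ?thesis unfolding Legendre_def by (simp add: cong_0_iff)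
  qed
  have nd: "\<not> p dvd r \<longleftrightarrow> r \<in> {1..<p}" if "r \<in> {0..<p}" for r
    using that by (cases "r = 0") (auto dest: dvd_imp_le)
  show ?thesis
  proof (cases "k = 1")
    case True
    hence "{r \<in> {0..<p}. PP k p r} = ?R" unfolding PP_def using L nd by (auto split: if_splits)
    thus ?thesis using qr_card[OF assms(1,2)] by simp
  next
    case False
    hence k: "k = -1" using assms(3) by auto
    hence "{r \<in> {0..<p}. PP k p r} = {1..<p} - ?R" unfolding PP_def using L nd by (auto split: if_splits)
    moreover have "card ({1..<p} - ?R) = card {1..<p} - card ?R"
      by (rule card_Diff_subset) auto
    ultimately have "card {r \<in> {0..<p}. PP k p r} = card {1..<p} - card ?R"
      by simp
    thus ?thesis using qr_card[OF assms(1,2)] assms(2) by (auto elim!: oddE)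
  qed
qed

lemma count_card:
  assumes "prime p" "odd p" "k \<in> {-1, 1}"
  shows "card {b \<in> {1..q*p}. PP k p (a + b)} = q * ((p - 1) div 2)"
proof -
  have p0: "p > 0" using assms(1) prime_gt_0_nat by blast
  have "bij_betw (\<lambda>b. a + b) {b \<in> {1..q*p}. PP k p (a + b)} {c \<in> {a+1..a+q*p}. PP k p c}"
    apply (rule bij_betw_byWitness[where f' = "\<lambda>c. c - a"])
    apply auto[3]
    apply (rule subsetI)
    apply (erule imageE)
    apply clarsimp
    apply arith
    done
  hence "card {b \<in> {1..q*p}. PP k p (a + b)} = card {c \<in> {a+1..a+q*p}. PP k p c}"
    by (rule bij_betw_same_card)
  also have "\<dots> = q * card {r \<in> {0..<p}. PP k p r}"
    by (rule block_card[of p "PP k p", OF p0 PP_per])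
  finally show ?thesis using res_card[OF assms] by simp
qed


lemma degree_eq:
  assumes bij: "bij_betw f V {1..n}" and v: "v \<in> V"
  shows "lg_degree k p V f v = card {b \<in> {1..n}. PP k p (f v + b)} - (if PP k p (2 * f v) then 1 else 0)"
proof -
  have inj: "inj_on f V" using bij bij_betw_def by blast
  have fv: "f v \<in> {1..n}" using bij_betw_apply[OF bij v] .
  let ?S = "{b \<in> {1..n}. PP k p (f v + b)}"
  have "f ` {u \<in> V. legendre_adj k p f v u} = ?S - {f v}"
  proof
    show "f ` {u \<in> V. legendre_adj k p f v u} \<subseteq> ?S - {f v}"
    proof
      fix b assume "b \<in> f ` {u \<in> V. legendre_adj k p f v u}"
      then obtain u where u: "u \<in> V" "legendre_adj k p f v u" "b = f u" by blast
      have "f u \<noteq> f v" using u(2) inj_onD[OF inj _ u(1) v] unfolding legendre_adj_def by auto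
      moreover have "f u \<in> {1..n}" using bij_betw_apply[OF bij u(1)] .
      ultimately show "b \<in> ?S - {f v}" using u unfolding legendre_adj_def PP_def by auto
    qed
    show "?S - {f v} \<subseteq> f ` {u \<in> V. legendre_adj k p f v u}"
    proof
      fix b assume b: "b \<in> ?S - {f v}"
      have "b \<in> f ` V" using b bij by (simp add: bij_betw_def)
      then obtain u where u: "u \<in> V" "b = f u" by blast
      have "u \<noteq> v" using u b by auto
      hence "legendre_adj k p f v u" using b u unfolding legendre_adj_def PP_def by auto
      thus "b \<in> f ` {u \<in> V. legendre_adj k p f v u}" using u by blast
    qed
  qed
  moreover have "inj_on f {u \<in> V. legendre_adj k p f v u}" using inj by (rule inj_on_subset) auto
  ultimately have "lg_degree k p V f v = card (?S - {f v})"
    unfolding lg_degree_def using card_image[of f "{u \<in> V. legendre_adj k p f v u}"] by simp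
  also have "\<dots> = card ?S - (if PP k p (2 * f v) then 1 else 0)"
  proof (cases "PP k p (2 * f v)")
    case True
    hence "f v \<in> ?S" using fv by (simp add: mult_2)
    thus ?thesis using True by (simp add: card_Diff_singleton)
  next
    case False
    hence "f v \<notin> ?S" by (simp add: mult_2)
    thus ?thesis using False by simp
  qed
  finally show ?thesis .
qed

theorem mainTheorem4:
  fixes p q :: nat and k :: int and V :: "'a set" and f :: "'a \<Rightarrow> nat"
  assumes "prime p" and "odd p" and "k \<in> {-1, 1}" and "q > 0"
    and "legendre_graph (q * p) V f"
  shows "int (lg_min_degree k p V f) = int q * ((int p - 1) div 2) - 1 \<and>
         int (lg_max_degree k p V f) = int q * ((int p - 1) div 2)"
proof -
  define h where "h = (p - 1) div 2"
  define c where "c = q * h"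
  have fin: "finite V" and bij: "bij_betw f V {1..q*p}" using assms(5) unfolding legendre_graph_def by auto
  have p2: "p > 2" using prime_ge_2_nat[OF assms(1)] assms(2) by (cases "p = 2") auto
  have h1: "h \<ge> 1" using p2 assms(2) unfolding h_def by (auto elim!: oddE)
  have c1: "c \<ge> 1" using h1 assms(4) unfolding c_def by simp
  have deg: "lg_degree k p V f v = c - (if PP k p (2 * f v) then 1 else 0)" if "v \<in> V" for v
    using degree_eq[OF bij that, of k p] count_card[OF assms(1-3), of q "f v"] unfolding c_def h_def by simp
  have pq: "p \<le> q * p" using assms(4) by simp
  have "p \<in> {1..q*p}" using pq p2 by auto
  then obtain v2 where v2: "v2 \<in> V" "f v2 = p" using bij unfolding bij_betw_def by (metis imageE)
  have "\<not> PP k p (2 * f v2)" using v2 unfolding PP_def by simp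
  hence d2: "lg_degree k p V f v2 = c" using deg[OF v2(1)] by simp
  have "card {r \<in> {0..<p}. PP k p r} \<ge> 1" using res_card[OF assms(1-3)] h1 h_def by simp
  then obtain r where r: "r \<in> {0..<p}" "PP k p r" by (metis (no_types, lifting) card.empty empty_Collect_eq not_one_le_zero)
  have r0: "r \<noteq> 0" using r unfolding PP_def by (cases "r = 0") auto
  define a where "a = (if even r then r div 2 else (r + p) div 2)"
  have ev: "even (r + p)" if "odd r" using that assms(2) by simp
  have a2: "2 * a = (if even r then r else r + p)"
    unfolding a_def using ev by (simp add: dvd_mult_div_cancel)
  have a1: "a \<in> {1..p}" using a2 r r0 by (cases "even r") auto
  have m: "2 * a mod p = r mod p" using a2 by simp
  have "PP k p (2 * a) = PP k p (2 * a mod p)" by (rule PP_per)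
  also have "\<dots> = PP k p (r mod p)" using m by simp
  also have "\<dots> = PP k p r" by (rule PP_per[symmetric])
  finally have "PP k p (2 * a)" using r(2) by simp
  moreover have "a \<in> {1..q*p}" using a1 le_trans[OF _ pq] by auto
  then obtain v1 where v1: "v1 \<in> V" "f v1 = a" using bij unfolding bij_betw_def by (metis imageE)
  ultimately have d1: "lg_degree k p V f v1 = c - 1" using deg[OF v1(1)] by simp
  have sub: "lg_degree k p V f ` V \<subseteq> {c - 1, c}" using deg by auto
  have ne: "V \<noteq> {}" using v1 by auto
  have mn: "lg_min_degree k p V f = c - 1"
    unfolding lg_min_degree_def
  proof (rule Min_eqI)
    show "finite (lg_degree k p V f ` V)" using fin by simp
    show "\<And>y. y \<in> lg_degree k p V f ` V \<Longrightarrow> c - 1 \<le> y" using sub by auto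
    show "c - 1 \<in> lg_degree k p V f ` V" using d1 v1 by (metis image_eqI)
  qed
  have mx: "lg_max_degree k p V f = c"
    unfolding lg_max_degree_def
  proof (rule Max_eqI)
    show "finite (lg_degree k p V f ` V)" using fin by simp
    show "\<And>y. y \<in> lg_degree k p V f ` V \<Longrightarrow> y \<le> c" using sub by auto
    show "c \<in> lg_degree k p V f ` V" using d2 v2 by (metis image_eqI)
  qed
  have hi: "(int p - 1) div 2 = int h" unfolding h_def using p2 by (simp add: zdiv_int of_nat_diff)
  show ?thesis using mn mx c1 hi unfolding c_def by (simp add: of_nat_diff)
qed

end
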